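(* For every positive integer $n$, $$(\sigma\ast\delta)(n)=\tfrac12\,(\mathbf 1\ast \tau\delta)(n),$$ where $\tau\delta$ is the pointwise product.
   Context: The arithmetic derivative $\delta$ is defined by $\delta(p)=1$ for every prime $p$ and $\delta(mn)=m\delta(n)+n\delta(m)$ for all positive integers $m,n$; equivalently $\delta(1)=0$ and $\delta(n)=n\sum_{p^\alpha\| n}\alpha/p$. $\mathbf 1(n)=1$ for all $n$, $\sigma(n)$ is the sum of the positive divisors of $n$, $\tau(n)$ is the number of positive divisors of $n$. The Dirichlet convolution is $(u\ast v)(n)=\sum_{d\mid n}u(d)v(n/d)$. *)

theory Defs
  imports Complex_Main "HOL-Computational_Algebra.Primes"
begin

text \<open>Arithmetic derivative: delta(n) = n * sum over p^a || n of a/p; delta(0) = 0 by convention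
  (only positive arguments are used).\<close>
definition arith_deriv :: "nat \<Rightarrow> nat" where
  "arith_deriv n = (\<Sum>p\<in>prime_factors n. multiplicity p n * (n div p))"

definition divisor_sigma :: "nat \<Rightarrow> nat" where
  "divisor_sigma n = (\<Sum>d | d dvd n. d)"

definition divisor_tau :: "nat \<Rightarrow> nat" where
  "divisor_tau n = card {d. d dvd n}"

definition dirichlet_conv :: "(nat \<Rightarrow> 'a::comm_semiring_1) \<Rightarrow> (nat \<Rightarrow> 'a) \<Rightarrow> nat \<Rightarrow> 'a" where
  "dirichlet_conv u v n = (\<Sum>d | d dvd n. u d * v (n div d))"

end

theory Submission
  imports Defs
begin

lemma ad_ext:
  assumes m: "m > 0" and A: "finite A" "prime_factors m \<subseteq> A" "\<forall>p\<in>A. prime p"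
  shows "arith_deriv m = (\<Sum>p\<in>A. multiplicity p m * (m div p))"
  unfolding arith_deriv_def
proof (rule sum.mono_neutral_left[OF A(1) A(2)])
  show "\<forall>i\<in>A - prime_factors m. multiplicity i m * (m div i) = 0"
  proof
    fix p assume p: "p \<in> A - prime_factors m"
    hence "\<not> p dvd m" using m A(3) by (auto simp: prime_factors_dvd)
    thus "multiplicity p m * (m div p) = 0" by (simp add: not_dvd_imp_multiplicity_0)
  qed
qed

lemma ad_mult:
  assumes m: "m > 0" and n: "n > 0"
  shows "arith_deriv (m*n) = m * arith_deriv n + n * arith_deriv m"
proof -
  define A where "A = prime_factors m \<union> prime_factors n"
  have fA: "finite A" "\<forall>p\<in>A. prime p" unfolding A_def by auto
  have pf: "prime_factors (m*n) = A" unfolding A_def using m n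
    by (simp add: prime_factors_product)
  have "arith_deriv (m*n) = (\<Sum>p\<in>A. multiplicity p (m*n) * (m*n div p))"
    using ad_ext[of "m*n" A] fA pf m n by simp
  also have "\<dots> = (\<Sum>p\<in>A. m * (multiplicity p n * (n div p)) + n * (multiplicity p m * (m div p)))"
  proof (rule sum.cong[OF refl])
    fix p assume "p \<in> A"
    hence p: "prime p" using fA by auto
    have mm: "multiplicity p (m*n) = multiplicity p m + multiplicity p n"
      using p m n by (simp add: prime_elem_multiplicity_mult_distrib)
    have h1: "multiplicity p m * (m*n div p) = n * (multiplicity p m * (m div p))"
    proof (cases "p dvd m")
      case True then obtain k where "m = p*k" by blast
      thus ?thesis using p by (simp add: prime_gt_0_nat)
    next
      case False thus ?thesis by (simp add: not_dvd_imp_multiplicity_0)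
    qed
    have h2: "multiplicity p n * (m*n div p) = m * (multiplicity p n * (n div p))"
    proof (cases "p dvd n")
      case True then obtain k where "n = p*k" by blast
      thus ?thesis using p by (simp add: prime_gt_0_nat)
    next
      case False thus ?thesis by (simp add: not_dvd_imp_multiplicity_0)
    qed
    show "multiplicity p (m*n) * (m*n div p) = m * (multiplicity p n * (n div p)) + n * (multiplicity p m * (m div p))"
      unfolding mm add_mult_distrib h1 h2 by simp
  qed
  also have "\<dots> = m * arith_deriv n + n * arith_deriv m"
    using ad_ext[of m A] ad_ext[of n A] fA m n unfolding A_def
    by (simp add: sum.distrib sum_distrib_left)
  finally show ?thesis .
qed

lemma key:
  assumes n: "n > 0"
  shows "2 * (\<Sum>d | d dvd n. d * arith_deriv (n div d)) = divisor_tau n * arith_deriv n"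
proof -
  have fin: "finite {d. d dvd n}" using n by simp
  have sym: "(\<Sum>d | d dvd n. (n div d) * arith_deriv d) = (\<Sum>d | d dvd n. d * arith_deriv (n div d))"
    by (rule sum.reindex_bij_witness[of _ "\<lambda>d. n div d" "\<lambda>d. n div d"])
       (use n in \<open>auto simp: div_div_eq_right dvd_div_eq_mult\<close>)
  have "divisor_tau n * arith_deriv n = (\<Sum>d | d dvd n. arith_deriv n)"
    unfolding divisor_tau_def by simp
  also have "\<dots> = (\<Sum>d | d dvd n. d * arith_deriv (n div d) + (n div d) * arith_deriv d)"
  proof (rule sum.cong[OF refl])
    fix d assume "d \<in> {d. d dvd n}"
    then obtain k where k: "n = d * k" by auto
    hence "d > 0" "k > 0" using n by auto
    thus "arith_deriv n = d * arith_deriv (n div d) + (n div d) * arith_deriv d"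
      using k ad_mult[of d k] by simp
  qed
  also have "\<dots> = 2 * (\<Sum>d | d dvd n. d * arith_deriv (n div d))"
    using sym by (simp add: sum.distrib)
  finally show ?thesis by simp
qed

theorem mainTheorem7:
  fixes n :: nat
  assumes "n > 0"
  shows "dirichlet_conv (\<lambda>k. real (divisor_sigma k)) (\<lambda>k. real (arith_deriv k)) n
       = (1/2) * dirichlet_conv (\<lambda>k. 1) (\<lambda>k. real (divisor_tau k) * real (arith_deriv k)) n"
proof -
  define D where "D = {d. d dvd n}"
  define S where "S = Sigma D (\<lambda>d. {e. e dvd d})"
  have finD: "finite D" using assms unfolding D_def by simp
  have finE: "\<And>d. d \<in> D \<Longrightarrow> finite {e. e dvd d}" using assms unfolding D_def
    by (auto intro: finite_divisors_nat dest: dvd_pos_nat)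
  have L: "(\<Sum>d\<in>D. divisor_sigma d * arith_deriv (n div d)) = (\<Sum>(d,e)\<in>S. e * arith_deriv (n div d))"
    unfolding S_def divisor_sigma_def
    by (subst sum.Sigma[symmetric]) (use finD finE in \<open>auto simp: sum_distrib_right\<close>)
  have R: "(\<Sum>d\<in>D. divisor_tau d * arith_deriv d) = 2 * (\<Sum>(d,e)\<in>S. e * arith_deriv (d div e))"
  proof -
    have "(\<Sum>d\<in>D. divisor_tau d * arith_deriv d) = (\<Sum>d\<in>D. 2 * (\<Sum>e | e dvd d. e * arith_deriv (d div e)))"
      by (rule sum.cong[OF refl], rule key[symmetric]) (use assms in \<open>auto simp: D_def dest: dvd_pos_nat\<close>)
    also have "\<dots> = 2 * (\<Sum>(d,e)\<in>S. e * arith_deriv (d div e))"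
      unfolding S_def sum_distrib_left[symmetric]
      by (subst sum.Sigma[symmetric]) (use finD finE in auto)
    finally show ?thesis .
  qed
  have P: "(e*(n div d), e) \<in> S \<and> e*(n div (e*(n div d))) = d \<and> (e*(n div d)) div e = n div d"
    if "(d,e) \<in> S" for d e
  proof -
    have "d dvd n" "e dvd d" using that unfolding S_def D_def by auto
    then obtain j k where j: "n = d * j" and k: "d = e * k" by (auto elim!: dvdE)
    have "d > 0" "e > 0" "k > 0" "j > 0" using assms j k by auto
    thus ?thesis using j k by (auto simp: S_def D_def mult.assoc mult.left_commute[of e])
  qed
  have X: "(\<Sum>(d,e)\<in>S. e * arith_deriv (n div d)) = (\<Sum>(d,e)\<in>S. e * arith_deriv (d div e))"
    by (rule sum.reindex_bij_witness[of _ "\<lambda>(d,e). (e * (n div d), e)" "\<lambda>(d,e). (e * (n div d), e)"])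
       (auto dest: P)
  have "2 * (\<Sum>d\<in>D. divisor_sigma d * arith_deriv (n div d)) = (\<Sum>d\<in>D. divisor_tau d * arith_deriv d)"
    using L R X by simp
  hence "2 * real (\<Sum>d\<in>D. divisor_sigma d * arith_deriv (n div d)) = real (\<Sum>d\<in>D. divisor_tau d * arith_deriv d)"
    by (metis of_nat_mult of_nat_numeral)
  moreover have "(\<Sum>d\<in>D. real (divisor_tau (n div d)) * real (arith_deriv (n div d)))
      = (\<Sum>d\<in>D. real (divisor_tau d) * real (arith_deriv d))"
    by (rule sum.reindex_bij_witness[of _ "\<lambda>d. n div d" "\<lambda>d. n div d"])
       (use assms in \<open>auto simp: D_def div_div_eq_right dvd_div_eq_mult\<close>)
  ultimately show ?thesis unfolding dirichlet_conv_def D_def by simp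
qed

end
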